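(* Let $B\ge0$, $L\ge2$, let $\Lambda\subset\mathbb{Z}$ be a finite set containing $\{1,\dots,L\}$ and let $\alpha=(\alpha_x)_{x\in\Lambda}$ take values in $[-B,B]$. Let $\mu$ be a Bernoulli measure on $\{0,1\}^\Lambda$ with external field $\alpha$, i.e. either the product measure with $\mu(\eta_x=1)=e^{\alpha_x+\lambda}/(1+e^{\alpha_x+\lambda})$ for some $\lambda\in\mathbb{R}$, or the measure proportional to $\exp\{\sum_{x\in\Lambda}\alpha_x\eta_x\}$ on configurations with a fixed number of particles. Then for every $f:\{0,1\}^\Lambda\to\mathbb{R}$, $$\int[f(T_{1L}\eta)-f(\eta)]^2d\mu(\eta)\le e^{13B}L\sum_{1\le x\le L-1}\int(\nabla_{x,x+1}f)^2d\mu(\eta).$$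
   Context: $T_{xy}\eta$ denotes $\eta$ with the occupations at $x$ and $y$ exchanged, and $\nabla_{xy}f(\eta)=f(T_{xy}\eta)-f(\eta)$. *)

theory Defs
  imports Complex_Main
begin

text \<open>Configurations on a finite set \<Lambda> of integer sites: occupation variables in {0,1}
  on \<Lambda>, fixed to 0 outside \<Lambda> (so that {0,1}^\<Lambda> is represented faithfully).\<close>
definition configs :: "int set \<Rightarrow> (int \<Rightarrow> nat) set" where
  "configs \<Lambda> = {\<eta>. (\<forall>x\<in>\<Lambda>. \<eta> x \<le> 1) \<and> (\<forall>x. x \<notin> \<Lambda> \<longrightarrow> \<eta> x = 0)}"

definition exch :: "int \<Rightarrow> int \<Rightarrow> (int \<Rightarrow> nat) \<Rightarrow> (int \<Rightarrow> nat)" where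
  "exch x y \<eta> = \<eta>(x := \<eta> y, y := \<eta> x)"

definition grad :: "int \<Rightarrow> int \<Rightarrow> ((int \<Rightarrow> nat) \<Rightarrow> real) \<Rightarrow> (int \<Rightarrow> nat) \<Rightarrow> real" where
  "grad x y f \<eta> = f (exch x y \<eta>) - f \<eta>"

definition gc_bernoulli :: "int set \<Rightarrow> (int \<Rightarrow> real) \<Rightarrow> real \<Rightarrow> (int \<Rightarrow> nat) \<Rightarrow> real" where
  "gc_bernoulli \<Lambda> \<alpha> lam \<eta> =
     (\<Prod>x\<in>\<Lambda>. let p = exp (\<alpha> x + lam) / (1 + exp (\<alpha> x + lam))
               in if \<eta> x = 1 then p else 1 - p)"

definition can_bernoulli :: "int set \<Rightarrow> (int \<Rightarrow> real) \<Rightarrow> nat \<Rightarrow> (int \<Rightarrow> nat) \<Rightarrow> real" where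
  "can_bernoulli \<Lambda> \<alpha> K \<eta> =
     (if (\<Sum>x\<in>\<Lambda>. \<eta> x) = K
      then exp (\<Sum>x\<in>\<Lambda>. \<alpha> x * real (\<eta> x)) /
           (\<Sum>\<zeta>\<in>{\<zeta>\<in>configs \<Lambda>. (\<Sum>x\<in>\<Lambda>. \<zeta> x) = K}. exp (\<Sum>x\<in>\<Lambda>. \<alpha> x * real (\<zeta> x)))
      else 0)"

definition bernoulli_measure :: "int set \<Rightarrow> (int \<Rightarrow> real) \<Rightarrow> ((int \<Rightarrow> nat) \<Rightarrow> real) \<Rightarrow> bool" where
  "bernoulli_measure \<Lambda> \<alpha> \<mu> \<longleftrightarrow>
     (\<exists>lam. \<mu> = gc_bernoulli \<Lambda> \<alpha> lam) \<or>
     (\<exists>K. K \<le> card \<Lambda> \<and> \<mu> = can_bernoulli \<Lambda> \<alpha> K)"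

definition integ :: "int set \<Rightarrow> ((int \<Rightarrow> nat) \<Rightarrow> real) \<Rightarrow> ((int \<Rightarrow> nat) \<Rightarrow> real) \<Rightarrow> real" where
  "integ \<Lambda> \<mu> g = (\<Sum>\<eta>\<in>configs \<Lambda>. \<mu> \<eta> * g \<eta>)"

end

theory Submission
  imports Defs
begin



lemma configs_01: "\<xi> \<in> configs \<Lambda> \<Longrightarrow> v \<in> \<Lambda> \<Longrightarrow> \<xi> v = 0 \<or> \<xi> v = 1"
  unfolding configs_def by (metis (mono_tags, lifting) le_SucE le_zero_eq mem_Collect_eq One_nat_def)

lemma exch_in: "\<xi> \<in> configs \<Lambda> \<Longrightarrow> a \<in> \<Lambda> \<Longrightarrow> b \<in> \<Lambda> \<Longrightarrow> exch a b \<xi> \<in> configs \<Lambda>"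
  unfolding configs_def exch_def by auto

lemma exch_invol[simp]: "exch a b (exch a b \<xi>) = \<xi>"
  unfolding exch_def by (auto simp: fun_eq_iff)

lemma exch_same: "\<xi> a = \<xi> b \<Longrightarrow> exch a b \<xi> = \<xi>"
  unfolding exch_def by (auto simp: fun_eq_iff)

lemma exch_apply: "exch a b \<xi> v = (if v = b then \<xi> a else if v = a then \<xi> b else \<xi> v)"
  unfolding exch_def by auto

lemma sum_exch:
  assumes "a \<in> \<Lambda>" "b \<in> \<Lambda>"
  shows "(\<Sum>\<xi>\<in>configs \<Lambda>. h (exch a b \<xi>)) = (\<Sum>\<xi>\<in>configs \<Lambda>. (h \<xi> :: real))"
  by (rule sum.reindex_bij_witness[where i="exch a b" and j="exch a b"])
     (auto simp: exch_in assms)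

lemma exch_comp1:
  assumes "\<xi> y = \<xi> x" "x \<noteq> y" "y \<noteq> z" "x \<noteq> z"
  shows "exch x z \<xi> = exch x y (exch y z \<xi>)"
proof (rule ext)
  fix v show "exch x z \<xi> v = exch x y (exch y z \<xi>) v"
    using assms by (cases "v = x"; cases "v = y"; cases "v = z") (simp_all add: exch_apply)
qed

lemma exch_comp2:
  assumes "\<xi> y = \<xi> z" "x \<noteq> y" "y \<noteq> z" "x \<noteq> z"
  shows "exch x z \<xi> = exch y z (exch x y \<xi>)"
proof (rule ext)
  fix v show "exch x z \<xi> v = exch y z (exch x y \<xi>) v"
    using assms by (cases "v = x"; cases "v = y"; cases "v = z") (simp_all add: exch_apply)
qed

lemma sq_split:
  fixes u v s t :: real
  assumes "s > 0" "t > 0"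
  shows "(u + v)^2 \<le> ((s+t)/s) * u^2 + ((s+t)/t) * v^2"
proof -
  have "((s+t)/s) * u^2 + ((s+t)/t) * v^2 - (u+v)^2 = (t*u - s*v)^2 / (s*t)"
    using assms by (simp add: field_simps power2_eq_square)
  also have "\<dots> \<ge> 0" using assms by simp
  finally show ?thesis by simp
qed




lemma sum_exch_sites:
  fixes h :: "int \<Rightarrow> nat \<Rightarrow> 'a::comm_monoid_add"
  assumes fin: "finite \<Lambda>" and ab: "a \<in> \<Lambda>" "b \<in> \<Lambda>" "a \<noteq> b"
  shows "(\<Sum>x\<in>\<Lambda>. h x (exch a b \<xi> x)) + (h a (\<xi> a) + h b (\<xi> b))
       = (\<Sum>x\<in>\<Lambda>. h x (\<xi> x)) + (h a (\<xi> b) + h b (\<xi> a))"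
proof -
  let ?R = "\<Lambda> - {a} - {b}"
  have r: "(\<Sum>x\<in>?R. h x (exch a b \<xi> x)) = (\<Sum>x\<in>?R. h x (\<xi> x))"
    by (rule sum.cong) (auto simp: exch_apply)
  have bR: "b \<in> \<Lambda> - {a}" using ab by auto
  have s1: "(\<Sum>x\<in>\<Lambda>. G x) = G a + (G b + (\<Sum>x\<in>?R. G x))" for G :: "int \<Rightarrow> 'a"
  proof -
    have "(\<Sum>x\<in>\<Lambda>. G x) = G a + (\<Sum>x\<in>\<Lambda> - {a}. G x)" by (rule sum.remove[OF fin ab(1)])
    moreover have "(\<Sum>x\<in>\<Lambda> - {a}. G x) = G b + (\<Sum>x\<in>?R. G x)"
      by (rule sum.remove) (use fin bR in auto)
    ultimately show ?thesis by simp
  qed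
  have ea: "exch a b \<xi> a = \<xi> b" and eb: "exch a b \<xi> b = \<xi> a" using ab by (auto simp: exch_apply)
  show ?thesis
    unfolding s1[of "\<lambda>x. h x (exch a b \<xi> x)"] s1[of "\<lambda>x. h x (\<xi> x)"] r ea eb
    by (simp only: ac_simps)
qed




lemma prod_exch_sites:
  fixes h :: "int \<Rightarrow> nat \<Rightarrow> 'a::comm_monoid_mult"
  assumes fin: "finite \<Lambda>" and ab: "a \<in> \<Lambda>" "b \<in> \<Lambda>" "a \<noteq> b"
  shows "(\<Prod>x\<in>\<Lambda>. h x (exch a b \<xi> x)) * (h a (\<xi> a) * h b (\<xi> b))
       = (\<Prod>x\<in>\<Lambda>. h x (\<xi> x)) * (h a (\<xi> b) * h b (\<xi> a))"
proof -
  let ?R = "\<Lambda> - {a} - {b}"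
  have r: "(\<Prod>x\<in>?R. h x (exch a b \<xi> x)) = (\<Prod>x\<in>?R. h x (\<xi> x))"
    by (rule prod.cong) (auto simp: exch_apply)
  have bR: "b \<in> \<Lambda> - {a}" using ab by auto
  have s1: "(\<Prod>x\<in>\<Lambda>. G x) = G a * (G b * (\<Prod>x\<in>?R. G x))" for G :: "int \<Rightarrow> 'a"
  proof -
    have "(\<Prod>x\<in>\<Lambda>. G x) = G a * (\<Prod>x\<in>\<Lambda> - {a}. G x)" by (rule prod.remove[OF fin ab(1)])
    moreover have "(\<Prod>x\<in>\<Lambda> - {a}. G x) = G b * (\<Prod>x\<in>?R. G x)"
      by (rule prod.remove) (use fin bR in auto)
    ultimately show ?thesis by simp
  qed
  have ea: "exch a b \<xi> a = \<xi> b" and eb: "exch a b \<xi> b = \<xi> a" using ab by (auto simp: exch_apply)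
  show ?thesis
    unfolding s1[of "\<lambda>x. h x (exch a b \<xi> x)"] s1[of "\<lambda>x. h x (\<xi> x)"] r ea eb
    by (simp only: ac_simps)
qed

definition energy :: "int set \<Rightarrow> (int \<Rightarrow> real) \<Rightarrow> (int \<Rightarrow> nat) \<Rightarrow> real" where
  "energy \<Lambda> \<alpha> \<xi> = (\<Sum>x\<in>\<Lambda>. \<alpha> x * real (\<xi> x))"

lemma energy_exch:
  assumes "finite \<Lambda>" "a \<in> \<Lambda>" "b \<in> \<Lambda>"
  shows "energy \<Lambda> \<alpha> (exch a b \<xi>) = energy \<Lambda> \<alpha> \<xi> + (\<alpha> a - \<alpha> b) * (real (\<xi> b) - real (\<xi> a))"
proof (cases "a = b")
  case True then show ?thesis by (simp add: exch_same)
next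
  case False
  from sum_exch_sites[OF assms False, of "\<lambda>x v. \<alpha> x * real v" \<xi>]
  show ?thesis unfolding energy_def by (simp add: algebra_simps)
qed

lemma count_exch:
  assumes "finite \<Lambda>" "a \<in> \<Lambda>" "b \<in> \<Lambda>"
  shows "(\<Sum>x\<in>\<Lambda>. exch a b \<xi> x) = (\<Sum>x\<in>\<Lambda>. \<xi> x)"
proof (cases "a = b")
  case True then show ?thesis by (simp add: exch_same)
next
  case False
  from sum_exch_sites[OF assms False, of "\<lambda>x v. v" \<xi>]
  show ?thesis by simp
qed

lemma can_swap:
  assumes "finite \<Lambda>" "a \<in> \<Lambda>" "b \<in> \<Lambda>"
  shows "can_bernoulli \<Lambda> \<alpha> K (exch a b \<xi>) = can_bernoulli \<Lambda> \<alpha> K \<xi> * exp ((\<alpha> a - \<alpha> b) * (real (\<xi> b) - real (\<xi> a)))"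
  using energy_exch[OF assms, of \<alpha> \<xi>] count_exch[OF assms, of \<xi>]
  unfolding can_bernoulli_def energy_def by (simp add: exp_add)

lemma can_nonneg: "0 \<le> can_bernoulli \<Lambda> \<alpha> K \<xi>"
  unfolding can_bernoulli_def by (auto intro!: divide_nonneg_nonneg sum_nonneg)

lemma gc_nonneg: "0 \<le> gc_bernoulli \<Lambda> \<alpha> lam \<xi>"
proof -
  have "0 \<le> (let p = exp (\<alpha> x + lam) / (1 + exp (\<alpha> x + lam)) in if \<xi> x = 1 then p else 1 - p)" for x
  proof -
    have "exp (\<alpha> x + lam) / (1 + exp (\<alpha> x + lam)) \<le> 1" by (simp add: divide_le_eq_1 add_pos_pos)
    then show ?thesis by (auto simp: Let_def add_pos_pos)
  qed
  then show ?thesis unfolding gc_bernoulli_def by (intro prod_nonneg) auto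
qed

lemma frac_id1: "(x::real) > 0 \<Longrightarrow> y > 0 \<Longrightarrow> x / (1 + x) * (1 / (1 + y)) = 1 / (1 + x) * (y / (1 + y)) * (x / y)"
  by (simp add: field_simps)

lemma frac_id2: "(x::real) > 0 \<Longrightarrow> y > 0 \<Longrightarrow> 1 / (1 + x) * (y / (1 + y)) = x / (1 + x) * (1 / (1 + y)) * (y / x)"
  by (simp add: field_simps)

lemma one_minus_frac: "1 + (x::real) > 0 \<Longrightarrow> 1 - x / (1 + x) = 1 / (1 + x)"
  by (simp add: field_simps)

lemma cancel_r: "(X::real) \<noteq> 0 \<Longrightarrow> P' * X = P * r * X \<Longrightarrow> P' = P * r" by simp

lemma gc_swap:
  assumes fin: "finite \<Lambda>" and ab: "a \<in> \<Lambda>" "b \<in> \<Lambda>" and xi: "\<xi> \<in> configs \<Lambda>"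
  shows "gc_bernoulli \<Lambda> \<alpha> lam (exch a b \<xi>) = gc_bernoulli \<Lambda> \<alpha> lam \<xi> * exp ((\<alpha> a - \<alpha> b) * (real (\<xi> b) - real (\<xi> a)))"
proof (cases "a = b \<or> \<xi> a = \<xi> b")
  case True then show ?thesis by (auto simp: exch_same)
next
  case False
  then have ne: "a \<noteq> b" and nv: "\<xi> a \<noteq> \<xi> b" by auto
  define g where "g x v = (let p = exp (\<alpha> x + lam) / (1 + exp (\<alpha> x + lam)) in if v = (1::nat) then p else 1 - p)" for x v
  define E where "E x = exp (\<alpha> x + lam)" for x
  have gE: "g x v = (if v = 1 then E x / (1 + E x) else 1 / (1 + E x))" for x v
  proof -
    have "1 + exp (\<alpha> x + lam) > 0" by (simp add: add_pos_pos)
    then have "1 - exp (\<alpha> x + lam) / (1 + exp (\<alpha> x + lam)) = 1 / (1 + exp (\<alpha> x + lam))"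
      by (rule one_minus_frac)
    then show ?thesis unfolding g_def E_def Let_def by simp
  qed
  have Epos: "E x > 0" for x unfolding E_def by simp
  have gE0: "g x 0 = 1 / (1 + E x)" for x using gE[of x 0] by simp
  have gE1: "g x 1 = E x / (1 + E x)" for x using gE[of x 1] by simp
  have gc: "gc_bernoulli \<Lambda> \<alpha> lam \<eta> = (\<Prod>x\<in>\<Lambda>. g x (\<eta> x))" for \<eta>
    unfolding gc_bernoulli_def g_def ..
  have key: "(\<Prod>x\<in>\<Lambda>. g x (exch a b \<xi> x)) * (g a (\<xi> a) * g b (\<xi> b))
       = (\<Prod>x\<in>\<Lambda>. g x (\<xi> x)) * (g a (\<xi> b) * g b (\<xi> a))"
    by (rule prod_exch_sites[OF fin ab ne])
  have v01: "\<xi> a = 0 \<and> \<xi> b = 1 \<or> \<xi> a = 1 \<and> \<xi> b = 0"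
    using configs_01[OF xi ab(1)] configs_01[OF xi ab(2)] nv by auto
  have rat: "g a (\<xi> b) * g b (\<xi> a) = g a (\<xi> a) * g b (\<xi> b) * exp ((\<alpha> a - \<alpha> b) * (real (\<xi> b) - real (\<xi> a)))"
  proof -
    have ea: "exp (\<alpha> b - \<alpha> a) = E b / E a" unfolding E_def by (simp add: exp_diff[symmetric] algebra_simps)
    have eb: "exp (\<alpha> a - \<alpha> b) = E a / E b" unfolding E_def by (simp add: exp_diff[symmetric] algebra_simps)
    from v01 show ?thesis
    proof
      assume h: "\<xi> a = 0 \<and> \<xi> b = 1"
      then have "(\<alpha> a - \<alpha> b) * (real (\<xi> b) - real (\<xi> a)) = \<alpha> a - \<alpha> b" by simp
      have l: "exp ((\<alpha> a - \<alpha> b) * (real (\<xi> b) - real (\<xi> a))) = E a / E b" using eb h by simp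
      have p1: "1 + E a > 0" "1 + E b > 0" "E a > 0" "E b > 0" using Epos[of a] Epos[of b] by auto
      have "g a (\<xi> b) * g b (\<xi> a) = E a / (1 + E a) * (1 / (1 + E b))" using h by (simp only: gE0 gE1)
      also have "\<dots> = 1 / (1 + E a) * (E b / (1 + E b)) * (E a / E b)" by (rule frac_id1) (use p1 in auto)
      also have "\<dots> = g a (\<xi> a) * g b (\<xi> b) * exp ((\<alpha> a - \<alpha> b) * (real (\<xi> b) - real (\<xi> a)))"
      proof -
        have "g a (\<xi> a) = 1 / (1 + E a)" "g b (\<xi> b) = E b / (1 + E b)" using h by (simp_all only: gE0 gE1)
        then show ?thesis by (simp only: l)
      qed
      finally show ?thesis .
    next
      assume h: "\<xi> a = 1 \<and> \<xi> b = 0"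
      then have "(\<alpha> a - \<alpha> b) * (real (\<xi> b) - real (\<xi> a)) = \<alpha> b - \<alpha> a" by simp
      have l: "exp ((\<alpha> a - \<alpha> b) * (real (\<xi> b) - real (\<xi> a))) = E b / E a" using ea h by simp
      have p1: "1 + E a > 0" "1 + E b > 0" "E a > 0" "E b > 0" using Epos[of a] Epos[of b] by auto
      have "g a (\<xi> b) * g b (\<xi> a) = 1 / (1 + E a) * (E b / (1 + E b))" using h by (simp only: gE0 gE1)
      also have "\<dots> = E a / (1 + E a) * (1 / (1 + E b)) * (E b / E a)" by (rule frac_id2) (use p1 in auto)
      also have "\<dots> = g a (\<xi> a) * g b (\<xi> b) * exp ((\<alpha> a - \<alpha> b) * (real (\<xi> b) - real (\<xi> a)))"
      proof -
        have "g a (\<xi> a) = E a / (1 + E a)" "g b (\<xi> b) = 1 / (1 + E b)" using h by (simp_all only: gE0 gE1)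
        then show ?thesis by (simp only: l)
      qed
      finally show ?thesis .
    qed
  qed
  have nz: "g a (\<xi> a) * g b (\<xi> b) \<noteq> 0"
    using Epos[of a] Epos[of b] by (simp add: gE add_pos_pos)
  define r where "r = exp ((\<alpha> a - \<alpha> b) * (real (\<xi> b) - real (\<xi> a)))"
  define X where "X = g a (\<xi> a) * g b (\<xi> b)"
  define P where "P = (\<Prod>x\<in>\<Lambda>. g x (\<xi> x))"
  define P' where "P' = (\<Prod>x\<in>\<Lambda>. g x (exch a b \<xi> x))"
  have k2: "P' * X = P * (X * r)" using key unfolding rat X_def r_def P_def P'_def .
  have "P' * X = (P * r) * X" unfolding k2 by (simp only: ac_simps)
  then have "P' = P * r" using nz unfolding X_def[symmetric] by (rule cancel_r[rotated])
  then have "(\<Prod>x\<in>\<Lambda>. g x (exch a b \<xi> x)) = (\<Prod>x\<in>\<Lambda>. g x (\<xi> x)) * r"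
    unfolding P_def P'_def .
  then show ?thesis by (simp only: gc r_def)
qed




definition Qf :: "int set \<Rightarrow> ((int \<Rightarrow> nat) \<Rightarrow> real) \<Rightarrow> ((int \<Rightarrow> nat) \<Rightarrow> real) \<Rightarrow> int \<Rightarrow> int \<Rightarrow> real" where
  "Qf \<Lambda> f w x z = (\<Sum>\<xi>\<in>configs \<Lambda>. w \<xi> * (f (exch x z \<xi>) - f \<xi>)^2)"

lemma exp_bound_mono:
  fixes w m E1 E2 :: real
  assumes "w \<le> exp E1 * m" "0 \<le> m" "E1 \<le> E2"
  shows "w \<le> exp E2 * m"
  using assms by (meson exp_le_cancel_iff mult_right_mono order_trans)

lemma exp_bound_swap:
  fixes w m E1 E2 D :: real
  assumes "w \<le> exp E1 * (m * exp D)" "0 \<le> m" "E1 + D \<le> E2"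
  shows "w \<le> exp E2 * m"
proof -
  have "exp E1 * (m * exp D) = exp (E1 + D) * m" by (simp add: exp_add)
  with assms show ?thesis using exp_bound_mono by metis
qed

lemma pointwise_split:
  fixes x y z :: int and \<xi> :: "int \<Rightarrow> nat" and w :: real and f :: "(int \<Rightarrow> nat) \<Rightarrow> real"
  assumes xyz: "x < y" "y < z" and w0: "0 \<le> w"
    and v01: "\<xi> x \<noteq> \<xi> z \<Longrightarrow> \<xi> y = \<xi> x \<or> \<xi> y = \<xi> z"
  defines "p \<equiv> real_of_int (z - x) / real_of_int (z - y)"
    and "q \<equiv> real_of_int (z - x) / real_of_int (y - x)"
  shows "w * (f (exch x z \<xi>) - f \<xi>)^2 \<le>
     p * ((if \<xi> y = \<xi> x \<and> \<xi> x \<noteq> \<xi> z then w * (f (exch y z \<xi>) - f \<xi>)^2 else 0)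
        + (if \<xi> y = \<xi> z \<and> \<xi> x \<noteq> \<xi> z then w * (f (exch y z (exch x y \<xi>)) - f (exch x y \<xi>))^2 else 0))
   + q * ((if \<xi> y = \<xi> z \<and> \<xi> x \<noteq> \<xi> z then w * (f (exch x y \<xi>) - f \<xi>)^2 else 0)
        + (if \<xi> y = \<xi> x \<and> \<xi> x \<noteq> \<xi> z then w * (f (exch x y (exch y z \<xi>)) - f (exch y z \<xi>))^2 else 0))"
proof -
  have s: "real_of_int (z - y) > 0" and t: "real_of_int (y - x) > 0" using xyz by auto
  have pq: "p = (real_of_int (z - y) + real_of_int (y - x)) / real_of_int (z - y)"
           "q = (real_of_int (z - y) + real_of_int (y - x)) / real_of_int (y - x)"
    unfolding p_def q_def by simp_all
  have p0: "p \<ge> 0" "q \<ge> 0" unfolding p_def q_def using xyz by auto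
  show ?thesis
  proof (cases "\<xi> x = \<xi> z")
    case True
    then have "exch x z \<xi> = \<xi>" by (rule exch_same)
    then show ?thesis using True by simp
  next
    case False
    then consider (c1) "\<xi> y = \<xi> x" | (c2) "\<xi> y = \<xi> z" using v01 by blast
    then show ?thesis
    proof cases
      case c1
      then have c2n: "\<xi> y \<noteq> \<xi> z" using False by simp
      have e: "exch x z \<xi> = exch x y (exch y z \<xi>)" by (rule exch_comp1) (use c1 xyz in auto)
      let ?u = "f (exch y z \<xi>) - f \<xi>" and ?v = "f (exch x y (exch y z \<xi>)) - f (exch y z \<xi>)"
      have "f (exch x z \<xi>) - f \<xi> = ?u + ?v" unfolding e by simp
      then have "w * (f (exch x z \<xi>) - f \<xi>)^2 = w * (?u + ?v)^2" by simp
      also have "\<dots> \<le> w * (p * ?u^2 + q * ?v^2)"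
        using sq_split[OF s t, of ?u ?v] w0 unfolding pq by (intro mult_left_mono) auto
      also have "\<dots> = p * (w * ?u^2) + q * (w * ?v^2)" by (simp add: algebra_simps)
      finally show ?thesis using c1 c2n False by simp
    next
      case c2
      then have c1n: "\<xi> y \<noteq> \<xi> x" using False by simp
      have e: "exch x z \<xi> = exch y z (exch x y \<xi>)" by (rule exch_comp2) (use c2 xyz in auto)
      let ?u = "f (exch x y \<xi>) - f \<xi>" and ?v = "f (exch y z (exch x y \<xi>)) - f (exch x y \<xi>)"
      have "f (exch x z \<xi>) - f \<xi> = ?v + ?u" unfolding e by simp
      then have "w * (f (exch x z \<xi>) - f \<xi>)^2 = w * (?v + ?u)^2" by simp
      also have "\<dots> \<le> w * (p * ?v^2 + q * ?u^2)"
        using sq_split[OF s t, of ?v ?u] w0 unfolding pq by (intro mult_left_mono) auto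
      also have "\<dots> = p * (w * ?v^2) + q * (w * ?u^2)" by (simp add: algebra_simps)
      finally show ?thesis using c2 c1n False by simp
    qed
  qed
qed




lemma if_sum_mult:
  fixes a b T :: real
  shows "(if C1 then a * T else 0) + (if C2 then b * T else 0) = ((if C1 then a else 0) + (if C2 then b else 0)) * T"
  by (cases C1; cases C2) (simp_all add: distrib_right)

lemma series_main:
  fixes \<Lambda> :: "int set" and \<alpha> :: "int \<Rightarrow> real" and \<mu> f :: "(int \<Rightarrow> nat) \<Rightarrow> real" and B :: real and L :: int
  assumes sub: "{1..L} \<subseteq> \<Lambda>"
    and abd: "\<forall>x\<in>\<Lambda>. \<bar>\<alpha> x\<bar> \<le> B"
    and mu_nn: "\<forall>\<xi>\<in>configs \<Lambda>. 0 \<le> \<mu> \<xi>"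
    and mu_sw: "\<forall>\<xi>\<in>configs \<Lambda>. \<forall>a\<in>\<Lambda>. \<forall>b\<in>\<Lambda>. \<mu> (exch a b \<xi>) = \<mu> \<xi> * exp ((\<alpha> a - \<alpha> b) * (real (\<xi> b) - real (\<xi> a)))"
  shows "\<forall>x z a c lam w. z - x = int n \<longrightarrow> 1 \<le> x \<longrightarrow> x < z \<longrightarrow> z \<le> L \<longrightarrow> \<alpha> x \<le> a \<longrightarrow> \<alpha> z \<le> c \<longrightarrow>
     (\<forall>v. x < v \<and> v < z \<longrightarrow> \<alpha> v \<le> a \<and> \<alpha> v \<le> c) \<longrightarrow>
     (\<forall>\<xi>\<in>configs \<Lambda>. 0 \<le> w \<xi> \<and> (\<xi> x \<noteq> \<xi> z \<longrightarrow> w \<xi> \<le> exp (lam - a * real (\<xi> x) - c * real (\<xi> z)) * \<mu> \<xi>)) \<longrightarrow>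
     Qf \<Lambda> f w x z \<le> real_of_int (z - x) * exp (lam + (a - \<alpha> x) + (c - \<alpha> z) + B) * (\<Sum>e\<in>{x..z-1}. Qf \<Lambda> f \<mu> e (e+1))"
proof (induction n rule: less_induct)
  case (less n)
  show ?case
  proof (intro allI impI)
    fix x z a c lam w
    assume zx: "z - x = int n" and x1: "1 \<le> x" and xz: "x < z" and zL: "z \<le> L"
      and ax: "\<alpha> x \<le> a" and cz: "\<alpha> z \<le> c"
      and int: "\<forall>v. x < v \<and> v < z \<longrightarrow> \<alpha> v \<le> a \<and> \<alpha> v \<le> c"
      and hw: "\<forall>\<xi>\<in>configs \<Lambda>. 0 \<le> w \<xi> \<and> (\<xi> x \<noteq> \<xi> z \<longrightarrow> w \<xi> \<le> exp (lam - a * real (\<xi> x) - c * real (\<xi> z)) * \<mu> \<xi>)"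
    let ?K = "exp (lam + (a - \<alpha> x) + (c - \<alpha> z) + B)"
    let ?D = "\<lambda>e. Qf \<Lambda> f \<mu> e (e+1)"
    have inL: "v \<in> \<Lambda>" if "1 \<le> v" "v \<le> L" for v using sub that by auto
    have xL: "x \<in> \<Lambda>" and zL': "z \<in> \<Lambda>" using inL x1 xz zL by auto
    have Dnn: "0 \<le> ?D e" for e unfolding Qf_def using mu_nn by (auto intro!: sum_nonneg)
    have B_a: "- a \<le> B" using abd xL ax by force
    have B_c: "- c \<le> B" using abd zL' cz by force
    show "Qf \<Lambda> f w x z \<le> real_of_int (z - x) * ?K * (\<Sum>e\<in>{x..z-1}. ?D e)"
    proof (cases "z = x + 1")
      case True
      have pt: "w \<xi> * (f (exch x z \<xi>) - f \<xi>)^2 \<le> exp (lam + B) * (\<mu> \<xi> * (f (exch x z \<xi>) - f \<xi>)^2)"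
        if xi: "\<xi> \<in> configs \<Lambda>" for \<xi>
      proof (cases "\<xi> x = \<xi> z")
        case True
        then show ?thesis using hw xi by (simp add: exch_same)
      next
        case False
        have wb: "w \<xi> \<le> exp (lam - a * real (\<xi> x) - c * real (\<xi> z)) * \<mu> \<xi>" using hw xi False by blast
        have "lam - a * real (\<xi> x) - c * real (\<xi> z) \<le> lam + B"
          using configs_01[OF xi xL] configs_01[OF xi zL'] False B_a B_c by auto
        then have "w \<xi> \<le> exp (lam + B) * \<mu> \<xi>"
          using exp_bound_mono[OF wb] mu_nn xi by blast
        then show ?thesis by (simp add: mult_right_mono mult.assoc[symmetric])
      qed
      have "Qf \<Lambda> f w x z \<le> (\<Sum>\<xi>\<in>configs \<Lambda>. exp (lam + B) * (\<mu> \<xi> * (f (exch x z \<xi>) - f \<xi>)^2))"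
        unfolding Qf_def by (rule sum_mono) (rule pt)
      also have "\<dots> = exp (lam + B) * ?D x" unfolding Qf_def True by (simp add: sum_distrib_left)
      also have "\<dots> \<le> ?K * ?D x"
        using ax cz Dnn[of x] by (intro mult_right_mono) auto
      also have "\<dots> = real_of_int (z - x) * ?K * (\<Sum>e\<in>{x..z-1}. ?D e)" using True by simp
      finally show ?thesis .
    next
      case False
      then have xz2: "x + 1 < z" using xz by simp
      obtain y where xy: "x < y" and yz: "y < z" and ymax: "\<forall>v. x < v \<and> v < z \<longrightarrow> \<alpha> v \<le> \<alpha> y"
      proof -
        let ?A = "{x<..<z}"
        have fA: "finite (\<alpha> ` ?A)" by simp
        have "x + 1 \<in> ?A" using xz2 by auto
        then have neA: "\<alpha> ` ?A \<noteq> {}" by blast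
        have "Max (\<alpha> ` ?A) \<in> \<alpha> ` ?A" using Max_in[OF fA neA] .
        then obtain y where yA: "y \<in> ?A" and yM: "\<alpha> y = Max (\<alpha> ` ?A)" by auto
        have "\<forall>v. x < v \<and> v < z \<longrightarrow> \<alpha> v \<le> \<alpha> y"
          using Max_ge[OF fA] unfolding yM by auto
        then show ?thesis using that yA by auto
      qed
      have yL: "y \<in> \<Lambda>" using inL x1 xy yz zL by auto
      have ay: "\<alpha> y \<le> a" and cy: "\<alpha> y \<le> c" using int xy yz by auto
      have dxy: "x \<noteq> y" "y \<noteq> x" "y \<noteq> z" "z \<noteq> y" "x \<noteq> z" "z \<noteq> x" using xy yz by auto
      define wA where "wA \<zeta> = (if \<zeta> y = \<zeta> x \<and> \<zeta> x \<noteq> \<zeta> z then w \<zeta> else 0)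
          + (if \<zeta> x = \<zeta> z \<and> \<zeta> y \<noteq> \<zeta> z then w (exch x y \<zeta>) else 0)" for \<zeta>
      define wB where "wB \<zeta> = (if \<zeta> y = \<zeta> z \<and> \<zeta> x \<noteq> \<zeta> z then w \<zeta> else 0)
          + (if \<zeta> z = \<zeta> x \<and> \<zeta> x \<noteq> \<zeta> y then w (exch y z \<zeta>) else 0)" for \<zeta>
      define p where "p = real_of_int (z - x) / real_of_int (z - y)"
      define q where "q = real_of_int (z - x) / real_of_int (y - x)"
      define A1 where "A1 \<xi> = (if \<xi> y = \<xi> x \<and> \<xi> x \<noteq> \<xi> z then w \<xi> * (f (exch y z \<xi>) - f \<xi>)^2 else 0)" for \<xi>
      define A2 where "A2 \<xi> = (if \<xi> y = \<xi> z \<and> \<xi> x \<noteq> \<xi> z then w \<xi> * (f (exch y z (exch x y \<xi>)) - f (exch x y \<xi>))^2 else 0)" for \<xi>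
      define B1 where "B1 \<xi> = (if \<xi> y = \<xi> z \<and> \<xi> x \<noteq> \<xi> z then w \<xi> * (f (exch x y \<xi>) - f \<xi>)^2 else 0)" for \<xi>
      define B2 where "B2 \<xi> = (if \<xi> y = \<xi> x \<and> \<xi> x \<noteq> \<xi> z then w \<xi> * (f (exch x y (exch y z \<xi>)) - f (exch y z \<xi>))^2 else 0)" for \<xi>
      have pt: "w \<xi> * (f (exch x z \<xi>) - f \<xi>)^2 \<le> p * (A1 \<xi> + A2 \<xi>) + q * (B1 \<xi> + B2 \<xi>)"
        if xi: "\<xi> \<in> configs \<Lambda>" for \<xi>
      proof -
        have w0: "0 \<le> w \<xi>" using hw xi by blast
        have v01: "\<xi> y = \<xi> x \<or> \<xi> y = \<xi> z" if "\<xi> x \<noteq> \<xi> z"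
          using configs_01[OF xi xL] configs_01[OF xi yL] configs_01[OF xi zL'] that by auto
        show ?thesis
          using pointwise_split[OF xy yz w0 v01, of f] unfolding A1_def A2_def B1_def B2_def p_def q_def
          by blast
      qed
      have eqA: "A1 \<zeta> + A2 (exch x y \<zeta>) = wA \<zeta> * (f (exch y z \<zeta>) - f \<zeta>)^2" for \<zeta>
      proof -
        have e1: "exch x y \<zeta> y = \<zeta> x" "exch x y \<zeta> x = \<zeta> y" "exch x y \<zeta> z = \<zeta> z"
          using dxy by (simp_all add: exch_apply)
        show ?thesis unfolding A1_def A2_def wA_def e1 exch_invol
          by (rule if_sum_mult)
      qed
      have eqB: "B1 \<zeta> + B2 (exch y z \<zeta>) = wB \<zeta> * (f (exch x y \<zeta>) - f \<zeta>)^2" for \<zeta>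
      proof -
        have e1: "exch y z \<zeta> y = \<zeta> z" "exch y z \<zeta> x = \<zeta> x" "exch y z \<zeta> z = \<zeta> y"
          using dxy by (simp_all add: exch_apply)
        show ?thesis unfolding B1_def B2_def wB_def e1 exch_invol
          by (rule if_sum_mult)
      qed
      have step1: "Qf \<Lambda> f w x z \<le> p * Qf \<Lambda> f wA y z + q * Qf \<Lambda> f wB x y"
      proof -
        have "Qf \<Lambda> f w x z \<le> (\<Sum>\<xi>\<in>configs \<Lambda>. p * (A1 \<xi> + A2 \<xi>) + q * (B1 \<xi> + B2 \<xi>))"
          unfolding Qf_def by (rule sum_mono) (rule pt)
        also have "\<dots> = p * (sum A1 (configs \<Lambda>) + sum A2 (configs \<Lambda>)) + q * (sum B1 (configs \<Lambda>) + sum B2 (configs \<Lambda>))"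
          by (simp add: sum.distrib sum_distrib_left[symmetric])
        also have "sum A2 (configs \<Lambda>) = (\<Sum>\<zeta>\<in>configs \<Lambda>. A2 (exch x y \<zeta>))"
          by (rule sum_exch[OF xL yL, symmetric])
        also have "sum B2 (configs \<Lambda>) = (\<Sum>\<zeta>\<in>configs \<Lambda>. B2 (exch y z \<zeta>))"
          by (rule sum_exch[OF yL zL', symmetric])
        also have "sum A1 (configs \<Lambda>) + (\<Sum>\<zeta>\<in>configs \<Lambda>. A2 (exch x y \<zeta>)) = Qf \<Lambda> f wA y z"
          unfolding Qf_def sum.distrib[symmetric] eqA ..
        also have "sum B1 (configs \<Lambda>) + (\<Sum>\<zeta>\<in>configs \<Lambda>. B2 (exch y z \<zeta>)) = Qf \<Lambda> f wB x y"
          unfolding Qf_def sum.distrib[symmetric] eqB ..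
        finally show ?thesis .
      qed
      have hA: "\<forall>\<zeta>\<in>configs \<Lambda>. 0 \<le> wA \<zeta> \<and> (\<zeta> y \<noteq> \<zeta> z \<longrightarrow>
          wA \<zeta> \<le> exp ((lam + (a - \<alpha> x)) - \<alpha> y * real (\<zeta> y) - c * real (\<zeta> z)) * \<mu> \<zeta>)"
      proof
        fix \<zeta> assume zc: "\<zeta> \<in> configs \<Lambda>"
        have ec: "exch x y \<zeta> \<in> configs \<Lambda>" using exch_in[OF zc xL yL] .
        have m0: "0 \<le> \<mu> \<zeta>" using mu_nn zc by blast
        have w1: "0 \<le> w \<zeta>" and w2: "0 \<le> w (exch x y \<zeta>)" using hw zc ec by auto
        have vx: "\<zeta> x = 0 \<or> \<zeta> x = 1" and vy: "\<zeta> y = 0 \<or> \<zeta> y = 1" and vz: "\<zeta> z = 0 \<or> \<zeta> z = 1"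
          using configs_01[OF zc xL] configs_01[OF zc yL] configs_01[OF zc zL'] by auto
        have exy: "exch x y \<zeta> x = \<zeta> y" "exch x y \<zeta> z = \<zeta> z" using dxy by (auto simp: exch_apply)
        have bnd: "wA \<zeta> \<le> exp ((lam + (a - \<alpha> x)) - \<alpha> y * real (\<zeta> y) - c * real (\<zeta> z)) * \<mu> \<zeta>"
        proof (cases "\<zeta> y = \<zeta> x \<and> \<zeta> x \<noteq> \<zeta> z")
          case True
          have nC2: "\<not> (\<zeta> x = \<zeta> z \<and> \<zeta> y \<noteq> \<zeta> z)" using True by blast
          have eqw: "wA \<zeta> = w \<zeta>" unfolding wA_def if_P[OF True] if_not_P[OF nC2] by simp
          have b: "w \<zeta> \<le> exp (lam - a * real (\<zeta> x) - c * real (\<zeta> z)) * \<mu> \<zeta>" using hw zc True by blast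
          have ineq: "lam - a * real (\<zeta> x) - c * real (\<zeta> z) \<le> (lam + (a - \<alpha> x)) - \<alpha> y * real (\<zeta> y) - c * real (\<zeta> z)"
            using True vx ax ay by auto
          show ?thesis unfolding eqw by (rule exp_bound_mono[OF b m0 ineq])
        next
          case F1: False
          show ?thesis
          proof (cases "\<zeta> x = \<zeta> z \<and> \<zeta> y \<noteq> \<zeta> z")
            case True
            have eqw: "wA \<zeta> = w (exch x y \<zeta>)" unfolding wA_def if_not_P[OF F1] if_P[OF True] by simp
            have b: "w (exch x y \<zeta>) \<le> exp (lam - a * real (\<zeta> y) - c * real (\<zeta> z)) * \<mu> (exch x y \<zeta>)"
            proof -
              have "exch x y \<zeta> x \<noteq> exch x y \<zeta> z" using True exy by simp
              then have "w (exch x y \<zeta>) \<le> exp (lam - a * real (exch x y \<zeta> x) - c * real (exch x y \<zeta> z)) * \<mu> (exch x y \<zeta>)"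
                using hw ec by blast
              then show ?thesis unfolding exy .
            qed
            have ms: "\<mu> (exch x y \<zeta>) = \<mu> \<zeta> * exp ((\<alpha> x - \<alpha> y) * (real (\<zeta> y) - real (\<zeta> x)))"
              using mu_sw zc xL yL by blast
            have ineq: "(lam - a * real (\<zeta> y) - c * real (\<zeta> z)) + (\<alpha> x - \<alpha> y) * (real (\<zeta> y) - real (\<zeta> x))
                \<le> (lam + (a - \<alpha> x)) - \<alpha> y * real (\<zeta> y) - c * real (\<zeta> z)"
              using True vx vy ax ay by auto
            show ?thesis unfolding eqw by (rule exp_bound_swap[OF b[unfolded ms] m0 ineq])
          next
            case False
            have "wA \<zeta> = 0" unfolding wA_def if_not_P[OF F1] if_not_P[OF False] by simp
            then show ?thesis using m0 by simp
          qed
        qed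
        have nn: "0 \<le> wA \<zeta>" unfolding wA_def using w1 w2 by simp
        show "0 \<le> wA \<zeta> \<and> (\<zeta> y \<noteq> \<zeta> z \<longrightarrow>
          wA \<zeta> \<le> exp ((lam + (a - \<alpha> x)) - \<alpha> y * real (\<zeta> y) - c * real (\<zeta> z)) * \<mu> \<zeta>)"
          using bnd nn by blast
      qed
      have hB: "\<forall>\<zeta>\<in>configs \<Lambda>. 0 \<le> wB \<zeta> \<and> (\<zeta> x \<noteq> \<zeta> y \<longrightarrow>
          wB \<zeta> \<le> exp ((lam + (c - \<alpha> z)) - a * real (\<zeta> x) - \<alpha> y * real (\<zeta> y)) * \<mu> \<zeta>)"
      proof
        fix \<zeta> assume zc: "\<zeta> \<in> configs \<Lambda>"
        have ec: "exch y z \<zeta> \<in> configs \<Lambda>" using exch_in[OF zc yL zL'] .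
        have m0: "0 \<le> \<mu> \<zeta>" using mu_nn zc by blast
        have w1: "0 \<le> w \<zeta>" and w2: "0 \<le> w (exch y z \<zeta>)" using hw zc ec by auto
        have vx: "\<zeta> x = 0 \<or> \<zeta> x = 1" and vy: "\<zeta> y = 0 \<or> \<zeta> y = 1" and vz: "\<zeta> z = 0 \<or> \<zeta> z = 1"
          using configs_01[OF zc xL] configs_01[OF zc yL] configs_01[OF zc zL'] by auto
        have eyz: "exch y z \<zeta> x = \<zeta> x" "exch y z \<zeta> z = \<zeta> y" using dxy by (auto simp: exch_apply)
        have bnd: "wB \<zeta> \<le> exp ((lam + (c - \<alpha> z)) - a * real (\<zeta> x) - \<alpha> y * real (\<zeta> y)) * \<mu> \<zeta>"
        proof (cases "\<zeta> y = \<zeta> z \<and> \<zeta> x \<noteq> \<zeta> z")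
          case True
          have nC2: "\<not> (\<zeta> z = \<zeta> x \<and> \<zeta> x \<noteq> \<zeta> y)" using True by auto
          have eqw: "wB \<zeta> = w \<zeta>" unfolding wB_def if_P[OF True] if_not_P[OF nC2] by simp
          have b: "w \<zeta> \<le> exp (lam - a * real (\<zeta> x) - c * real (\<zeta> z)) * \<mu> \<zeta>" using hw zc True by blast
          have ineq: "lam - a * real (\<zeta> x) - c * real (\<zeta> z) \<le> (lam + (c - \<alpha> z)) - a * real (\<zeta> x) - \<alpha> y * real (\<zeta> y)"
            using True vz cz cy by auto
          show ?thesis unfolding eqw by (rule exp_bound_mono[OF b m0 ineq])
        next
          case F1: False
          show ?thesis
          proof (cases "\<zeta> z = \<zeta> x \<and> \<zeta> x \<noteq> \<zeta> y")
            case True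
            have eqw: "wB \<zeta> = w (exch y z \<zeta>)" unfolding wB_def if_not_P[OF F1] if_P[OF True] by simp
            have b: "w (exch y z \<zeta>) \<le> exp (lam - a * real (\<zeta> x) - c * real (\<zeta> y)) * \<mu> (exch y z \<zeta>)"
            proof -
              have "exch y z \<zeta> x \<noteq> exch y z \<zeta> z" using True eyz by simp
              then have "w (exch y z \<zeta>) \<le> exp (lam - a * real (exch y z \<zeta> x) - c * real (exch y z \<zeta> z)) * \<mu> (exch y z \<zeta>)"
                using hw ec by blast
              then show ?thesis unfolding eyz .
            qed
            have ms: "\<mu> (exch y z \<zeta>) = \<mu> \<zeta> * exp ((\<alpha> y - \<alpha> z) * (real (\<zeta> z) - real (\<zeta> y)))"
              using mu_sw zc yL zL' by blast
            have ineq: "(lam - a * real (\<zeta> x) - c * real (\<zeta> y)) + (\<alpha> y - \<alpha> z) * (real (\<zeta> z) - real (\<zeta> y))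
                \<le> (lam + (c - \<alpha> z)) - a * real (\<zeta> x) - \<alpha> y * real (\<zeta> y)"
              using True vy vz cz cy by auto
            show ?thesis unfolding eqw by (rule exp_bound_swap[OF b[unfolded ms] m0 ineq])
          next
            case False
            have "wB \<zeta> = 0" unfolding wB_def if_not_P[OF F1] if_not_P[OF False] by simp
            then show ?thesis using m0 by simp
          qed
        qed
        have nn: "0 \<le> wB \<zeta>" unfolding wB_def using w1 w2 by simp
        show "0 \<le> wB \<zeta> \<and> (\<zeta> x \<noteq> \<zeta> y \<longrightarrow>
          wB \<zeta> \<le> exp ((lam + (c - \<alpha> z)) - a * real (\<zeta> x) - \<alpha> y * real (\<zeta> y)) * \<mu> \<zeta>)"
          using bnd nn by blast
      qed
      let ?SA = "\<Sum>e\<in>{y..z-1}. ?D e" and ?SB = "\<Sum>e\<in>{x..y-1}. ?D e"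
      have IHA: "Qf \<Lambda> f wA y z \<le> real_of_int (z - y) * ?K * ?SA"
      proof -
        have lt: "nat (z - y) < n" using zx xy yz by linarith
        have "Qf \<Lambda> f wA y z \<le> real_of_int (z - y) * exp ((lam + (a - \<alpha> x)) + (\<alpha> y - \<alpha> y) + (c - \<alpha> z) + B) * ?SA"
          using less.IH[OF lt, rule_format, where x=y and z=z and a="\<alpha> y" and c=c and lam="lam + (a - \<alpha> x)" and w=wA] xy yz zL x1 cz ymax int hA
          by auto
        then show ?thesis by simp
      qed
      have IHB: "Qf \<Lambda> f wB x y \<le> real_of_int (y - x) * ?K * ?SB"
      proof -
        have lt: "nat (y - x) < n" using zx xy yz by linarith
        have "Qf \<Lambda> f wB x y \<le> real_of_int (y - x) * exp ((lam + (c - \<alpha> z)) + (a - \<alpha> x) + (\<alpha> y - \<alpha> y) + B) * ?SB"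
          using less.IH[OF lt, rule_format, where x=x and z=y and a=a and c="\<alpha> y" and lam="lam + (c - \<alpha> z)" and w=wB] xy yz zL x1 ax ymax int hB
          by auto
        then show ?thesis by (simp add: algebra_simps)
      qed
      have p0: "0 \<le> p" "0 \<le> q" unfolding p_def q_def using xy yz by auto
      have pz: "p * real_of_int (z - y) = real_of_int (z - x)" unfolding p_def using yz by simp
      have qz: "q * real_of_int (y - x) = real_of_int (z - x)" unfolding q_def using xy by simp
      have split: "(\<Sum>e\<in>{x..z-1}. ?D e) = ?SB + ?SA"
      proof -
        have "{x..z-1} = {x..y-1} \<union> {y..z-1}" using xy yz by auto
        then show ?thesis by (simp add: sum.union_disjoint)
      qed
      have "Qf \<Lambda> f w x z \<le> p * (real_of_int (z - y) * ?K * ?SA) + q * (real_of_int (y - x) * ?K * ?SB)"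
        using step1 IHA IHB p0 by (smt (verit) mult_left_mono)
      also have "\<dots> = (p * real_of_int (z - y)) * ?K * ?SA + (q * real_of_int (y - x)) * ?K * ?SB"
        by (simp add: algebra_simps)
      also have "\<dots> = real_of_int (z - x) * ?K * (\<Sum>e\<in>{x..z-1}. ?D e)"
        unfolding pz qz split by (simp add: algebra_simps)
      finally show ?thesis .
    qed
  qed
qed




lemma bern_props:
  assumes fin: "finite \<Lambda>" and bm: "bernoulli_measure \<Lambda> \<alpha> \<mu>"
  shows "\<forall>\<xi>\<in>configs \<Lambda>. 0 \<le> \<mu> \<xi>"
    and "\<forall>\<xi>\<in>configs \<Lambda>. \<forall>a\<in>\<Lambda>. \<forall>b\<in>\<Lambda>. \<mu> (exch a b \<xi>) = \<mu> \<xi> * exp ((\<alpha> a - \<alpha> b) * (real (\<xi> b) - real (\<xi> a)))"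
proof -
  from bm consider (gc) lam where "\<mu> = gc_bernoulli \<Lambda> \<alpha> lam" | (can) K where "\<mu> = can_bernoulli \<Lambda> \<alpha> K"
    unfolding bernoulli_measure_def by blast
  then have both: "(\<forall>\<xi>\<in>configs \<Lambda>. 0 \<le> \<mu> \<xi>) \<and>
    (\<forall>\<xi>\<in>configs \<Lambda>. \<forall>a\<in>\<Lambda>. \<forall>b\<in>\<Lambda>. \<mu> (exch a b \<xi>) = \<mu> \<xi> * exp ((\<alpha> a - \<alpha> b) * (real (\<xi> b) - real (\<xi> a))))"
  proof cases
    case gc
    then show ?thesis using gc_nonneg gc_swap[OF fin] by auto
  next
    case can
    then show ?thesis using can_nonneg can_swap[OF fin] by auto
  qed
  then show "\<forall>\<xi>\<in>configs \<Lambda>. 0 \<le> \<mu> \<xi>"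
    and "\<forall>\<xi>\<in>configs \<Lambda>. \<forall>a\<in>\<Lambda>. \<forall>b\<in>\<Lambda>. \<mu> (exch a b \<xi>) = \<mu> \<xi> * exp ((\<alpha> a - \<alpha> b) * (real (\<xi> b) - real (\<xi> a)))"
    by auto
qed

theorem lemma5p2:
  fixes B :: real and L :: int and \<Lambda> :: "int set" and \<alpha> :: "int \<Rightarrow> real"
    and \<mu> :: "(int \<Rightarrow> nat) \<Rightarrow> real" and f :: "(int \<Rightarrow> nat) \<Rightarrow> real"
  assumes "B \<ge> 0" and "L \<ge> 2" and "finite \<Lambda>" and "{1..L} \<subseteq> \<Lambda>"
    and "\<forall>x\<in>\<Lambda>. \<bar>\<alpha> x\<bar> \<le> B"
    and "bernoulli_measure \<Lambda> \<alpha> \<mu>"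
  shows "integ \<Lambda> \<mu> (\<lambda>\<eta>. (f (exch 1 L \<eta>) - f \<eta>)^2)
         \<le> exp (13 * B) * real_of_int L *
            (\<Sum>x\<in>{1..L-1}. integ \<Lambda> \<mu> (\<lambda>\<eta>. (grad x (x+1) f \<eta>)^2))"
proof -
  note B0 = assms(1) and L2 = assms(2) and fin = assms(3) and sub = assms(4) and abd = assms(5)
  have mu_nn: "\<forall>\<xi>\<in>configs \<Lambda>. 0 \<le> \<mu> \<xi>" using bern_props(1)[OF fin assms(6)] .
  have mu_sw: "\<forall>\<xi>\<in>configs \<Lambda>. \<forall>a\<in>\<Lambda>. \<forall>b\<in>\<Lambda>. \<mu> (exch a b \<xi>) = \<mu> \<xi> * exp ((\<alpha> a - \<alpha> b) * (real (\<xi> b) - real (\<xi> a)))"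
    using bern_props(2)[OF fin assms(6)] .
  have L1: "1 \<in> \<Lambda>" "L \<in> \<Lambda>" using sub L2 by auto
  have a1: "\<alpha> 1 \<le> B" "- B \<le> \<alpha> 1" "\<alpha> L \<le> B" "- B \<le> \<alpha> L" using abd L1 by force+
  let ?S = "\<Sum>e\<in>{1..L-1}. Qf \<Lambda> f \<mu> e (e+1)"
  have hw: "\<forall>\<xi>\<in>configs \<Lambda>. 0 \<le> \<mu> \<xi> \<and> (\<xi> 1 \<noteq> \<xi> L \<longrightarrow> \<mu> \<xi> \<le> exp (B - B * real (\<xi> 1) - B * real (\<xi> L)) * \<mu> \<xi>)"
  proof
    fix \<xi> assume xi: "\<xi> \<in> configs \<Lambda>"
    have "\<xi> 1 \<noteq> \<xi> L \<Longrightarrow> B - B * real (\<xi> 1) - B * real (\<xi> L) = 0"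
      using configs_01[OF xi L1(1)] configs_01[OF xi L1(2)] by auto
    then show "0 \<le> \<mu> \<xi> \<and> (\<xi> 1 \<noteq> \<xi> L \<longrightarrow> \<mu> \<xi> \<le> exp (B - B * real (\<xi> 1) - B * real (\<xi> L)) * \<mu> \<xi>)"
      using mu_nn xi by auto
  qed
  have intr: "\<forall>v. 1 < v \<and> v < L \<longrightarrow> \<alpha> v \<le> B \<and> \<alpha> v \<le> B"
  proof (intro allI impI)
    fix v :: int assume "1 < v \<and> v < L"
    then have "v \<in> \<Lambda>" using sub by auto
    then show "\<alpha> v \<le> B \<and> \<alpha> v \<le> B" using abd by force
  qed
  have main: "Qf \<Lambda> f \<mu> 1 L \<le> real_of_int (L - 1) * exp (B + (B - \<alpha> 1) + (B - \<alpha> L) + B) * ?S"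
    using series_main[OF sub abd mu_nn mu_sw, of "nat (L - 1)" f, rule_format,
        where x=1 and z=L and a=B and c=B and lam=B and w=\<mu>] L2 a1 intr hw
    by auto
  have Snn: "0 \<le> ?S" unfolding Qf_def using mu_nn by (auto intro!: sum_nonneg)
  have "exp (B + (B - \<alpha> 1) + (B - \<alpha> L) + B) \<le> exp (13 * B)" using a1 B0 by simp
  then have "real_of_int (L - 1) * exp (B + (B - \<alpha> 1) + (B - \<alpha> L) + B) * ?S \<le> exp (13 * B) * real_of_int L * ?S"
    using L2 Snn by (intro mult_right_mono) (auto simp: mult.commute intro!: mult_mono)
  with main have "Qf \<Lambda> f \<mu> 1 L \<le> exp (13 * B) * real_of_int L * ?S" by linarith
  moreover have "integ \<Lambda> \<mu> (\<lambda>\<eta>. (f (exch 1 L \<eta>) - f \<eta>)^2) = Qf \<Lambda> f \<mu> 1 L"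
    unfolding integ_def Qf_def ..
  moreover have "(\<Sum>x\<in>{1..L-1}. integ \<Lambda> \<mu> (\<lambda>\<eta>. (grad x (x+1) f \<eta>)^2)) = ?S"
    unfolding integ_def Qf_def grad_def ..
  ultimately show ?thesis by simp
qed



end
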